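(* Let $(M_0,d,\Gamma)$ be a cone-like space and $\psi:M_0\to\mathbb{R}_+^*$ a function with $\psi\circ f=\rho(f)\psi$ for every $f\in\Gamma$, such that $\psi$ and $\psi^{-1}$ are locally bounded. Then $\psi$ is quasi-linear.
   Context: A cone-like space is a locally compact metric space $(M_0,d)$ together with a finitely generated, non-trivial group $\Gamma$ acting freely and properly discontinuously on $M_0$ by homotheties (i.e. for each $f\in\Gamma$ there is $\rho(f)>0$ with $d(f(x),f(y))=\rho(f)d(x,y)$ for all $x,y$), such that the identity is the only element of $\Gamma$ acting as an isometry, and such that the quotient $M_0/\Gamma$ is compact. The metric completion of a cone-like space is $M_0\cup\{\omega\}$ for a single point $\omega$ (the singularity); $\delta(x):=d(x,\omega)$. A positive function $\psi$ on $M_0$ is quasi-linear if there are constants $0<k_1\le k_2$ with $k_1\delta\le\psi\le k_2\delta$ on $M_0$. *)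

theory Defs
  imports "HOL-Analysis.Analysis" "HOL-Algebra.Bij" "HOL-Algebra.Generated_Groups"
begin

text \<open>The cone-like space M0 is the whole carrier of a metric space type 'a;
  the group Gamma is a group of bijections of 'a under composition.\<close>

definition is_homothety :: "('a::metric_space \<Rightarrow> 'a) \<Rightarrow> real \<Rightarrow> bool" where
  "is_homothety f r \<longleftrightarrow> r > 0 \<and> (\<forall>x y. dist (f x) (f y) = r * dist x y)"

definition hratio :: "('a::metric_space \<Rightarrow> 'a) \<Rightarrow> real" where
  "hratio f = (SOME r. is_homothety f r)"

definition orbit :: "('a \<Rightarrow> 'a) set \<Rightarrow> 'a \<Rightarrow> 'a set" where
  "orbit G x = {f x | f. f \<in> G}"

definition cone_like :: "('a::metric_space \<Rightarrow> 'a) set \<Rightarrow> bool" where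
  "cone_like G \<longleftrightarrow>
     locally_compact_space (euclidean :: 'a topology) \<and>
     subgroup G (BijGroup (UNIV :: 'a set)) \<and>
     (\<exists>S. finite S \<and> S \<subseteq> G \<and> G = generate (BijGroup (UNIV :: 'a set)) S) \<and>
     G \<noteq> {id} \<and>
     (\<forall>f\<in>G. \<exists>r. is_homothety f r) \<and>
     (\<forall>f\<in>G. \<forall>x. f x = x \<longrightarrow> f = id) \<and>
     (\<forall>K. compact K \<longrightarrow> finite {f \<in> G. f ` K \<inter> K \<noteq> {}}) \<and>
     (\<forall>f\<in>G. (\<forall>x y. dist (f x) (f y) = dist x y) \<longrightarrow> f = id) \<and>
     (\<exists>Q. quotient_map (euclidean :: 'a topology) Q (orbit G) \<and> compact_space Q)"

text \<open>Distance to the singularity omega: the completion is M0 plus one point omega,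
  and every non-convergent Cauchy sequence of M0 converges to omega in the completion,
  so d(x, omega) is the limit of dist x (s n) for any such sequence s.\<close>

definition sing_dist :: "'a::metric_space \<Rightarrow> real" where
  "sing_dist x = (THE r. \<exists>s. Cauchy s \<and> \<not> convergent s \<and> (\<lambda>n. dist x (s n)) \<longlonglongrightarrow> r)"

definition quasi_linear :: "('a::metric_space \<Rightarrow> real) \<Rightarrow> bool" where
  "quasi_linear \<psi> \<longleftrightarrow> (\<forall>x. \<psi> x > 0) \<and>
     (\<exists>k1 k2. 0 < k1 \<and> k1 \<le> k2 \<and> (\<forall>x. k1 * sing_dist x \<le> \<psi> x \<and> \<psi> x \<le> k2 * sing_dist x))"

definition locally_bounded :: "('a::metric_space \<Rightarrow> real) \<Rightarrow> bool" where
  "locally_bounded g \<longleftrightarrow> (\<forall>x. \<exists>U. open U \<and> x \<in> U \<and> bounded (g ` U))"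

end

theory Submission imports Defs begin

lemma bij_group_facts:
  assumes sg: "subgroup G (BijGroup (UNIV::'a set))"
  shows "id \<in> G"
    and "\<And>f h. f \<in> G \<Longrightarrow> h \<in> G \<Longrightarrow> f \<circ> h \<in> G"
    and "\<And>f. f \<in> G \<Longrightarrow> \<exists>h\<in>G. f \<circ> h = id \<and> h \<circ> f = id"
proof -
  interpret grp: group "BijGroup (UNIV::'a set)" by (rule group_BijGroup)
  have one: "\<one>\<^bsub>BijGroup (UNIV::'a set)\<^esub> = id" by (auto simp: BijGroup_def fun_eq_iff)
  have car: "carrier (BijGroup (UNIV::'a set)) = Bij UNIV" by (simp add: BijGroup_def)
  have mult: "\<And>f h. f \<in> Bij UNIV \<Longrightarrow> h \<in> Bij UNIV \<Longrightarrow> f \<otimes>\<^bsub>BijGroup (UNIV::'a set)\<^esub> h = f \<circ> h"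
    by (auto simp: BijGroup_def compose_def fun_eq_iff)
  have sub: "G \<subseteq> Bij UNIV" using subgroup.subset[OF sg] car by simp
  show "id \<in> G" using subgroup.one_closed[OF sg] one by simp
  show "\<And>f h. f \<in> G \<Longrightarrow> h \<in> G \<Longrightarrow> f \<circ> h \<in> G"
    using subgroup.m_closed[OF sg] sub mult by (metis subsetD)
  show "\<exists>h\<in>G. f \<circ> h = id \<and> h \<circ> f = id" if f: "f \<in> G" for f
  proof -
    have fc: "f \<in> carrier (BijGroup UNIV)" using sub f car by auto
    let ?h = "inv\<^bsub>BijGroup (UNIV::'a set)\<^esub> f"
    have hG: "?h \<in> G" using subgroup.m_inv_closed[OF sg f] .
    have hc: "?h \<in> Bij UNIV" using sub hG by auto
    have "f \<otimes>\<^bsub>BijGroup UNIV\<^esub> ?h = \<one>\<^bsub>BijGroup UNIV\<^esub>" using grp.r_inv[OF fc] .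
    then have 1: "f \<circ> ?h = id" using mult[of f ?h] hc fc car one by metis
    have "?h \<otimes>\<^bsub>BijGroup UNIV\<^esub> f = \<one>\<^bsub>BijGroup UNIV\<^esub>" using grp.l_inv[OF fc] .
    then have 2: "?h \<circ> f = id" using mult[of ?h f] hc fc car one by metis
    show ?thesis using hG 1 2 by blast
  qed
qed

lemma homothety_tendsto:
  assumes "is_homothety f c" "X \<longlonglongrightarrow> l"
  shows "(\<lambda>n. f (X n)) \<longlonglongrightarrow> f l"
proof -
  have "(\<lambda>n. dist (X n) l) \<longlonglongrightarrow> 0" using assms(2) tendsto_dist_iff by blast
  then have "(\<lambda>n. c * dist (X n) l) \<longlonglongrightarrow> 0" by (simp add: tendsto_mult_right_zero)
  moreover have "\<And>n. dist (f (X n)) (f l) = c * dist (X n) l" using assms(1) by (simp add: is_homothety_def)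
  ultimately show ?thesis using tendsto_dist_iff by fastforce
qed

lemma homothety_cont:
  assumes "is_homothety f c" shows "continuous_on S f"
proof -
  have "c-lipschitz_on S f" using assms by (auto simp: lipschitz_on_def is_homothety_def)
  then show ?thesis by (rule lipschitz_on_continuous_on)
qed

lemma homothety_Cauchy:
  assumes "is_homothety f c" "Cauchy X"
  shows "Cauchy (\<lambda>n. f (X (n + N)))"
  unfolding Cauchy_def
proof (intro allI impI)
  fix e :: real assume e: "e > 0"
  have c: "c > 0" and d: "\<And>x y. dist (f x) (f y) = c * dist x y" using assms(1) by (auto simp: is_homothety_def)
  obtain M where M: "\<forall>m\<ge>M. \<forall>n\<ge>M. dist (X m) (X n) < e / c" using assms(2) e c unfolding Cauchy_def
    by (meson divide_pos_pos)
  have "dist (f (X (m + N))) (f (X (n + N))) < e" if "m \<ge> M" "n \<ge> M" for m n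
  proof -
    have "dist (X (m + N)) (X (n + N)) < e / c" using M that by auto
    then show ?thesis using d c by (simp add: pos_less_divide_eq mult.commute)
  qed
  then show "\<exists>M. \<forall>m\<ge>M. \<forall>n\<ge>M. dist (f (X (m + N))) (f (X (n + N))) < e" by blast
qed

lemma homothety_funpow:
  assumes "is_homothety g l" shows "is_homothety (g ^^ m) (l ^ m)"
  using assms by (induction m) (auto simp: is_homothety_def)

lemma dist_Cauchy_real:
  fixes X :: "nat \<Rightarrow> 'a::metric_space"
  assumes "Cauchy X" shows "convergent (\<lambda>n. dist y (X n))"
proof -
  have "Cauchy (\<lambda>n. dist y (X n))"
    unfolding Cauchy_def
  proof (intro allI impI)
    fix e :: real assume "e > 0"
    then obtain M where M: "\<forall>m\<ge>M. \<forall>n\<ge>M. dist (X m) (X n) < e" using assms unfolding Cauchy_def by blast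
    have "dist (dist y (X m)) (dist y (X n)) < e" if "m \<ge> M" "n \<ge> M" for m n
    proof -
      have "dist (X m) (X n) < e" using M that by auto
      moreover have "dist y (X m) \<le> dist y (X n) + dist (X m) (X n)" "dist y (X n) \<le> dist y (X m) + dist (X m) (X n)"
        by (metis dist_commute dist_triangle)+
      ultimately show ?thesis by (simp add: dist_real_def)
    qed
    then show "\<exists>M. \<forall>m\<ge>M. \<forall>n\<ge>M. dist (dist y (X m)) (dist y (X n)) < e" by blast
  qed
  then show ?thesis using Cauchy_convergent_iff by blast
qed

lemma locally_bounded_compact:
  assumes "locally_bounded h" "compact K"
  shows "\<exists>B. \<forall>x\<in>K. \<bar>h x\<bar> \<le> B"
proof -
  have "\<forall>x. \<exists>U. open U \<and> x \<in> U \<and> bounded (h ` U)" using assms(1) by (simp add: locally_bounded_def)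
  then obtain U where U: "\<And>x. open (U x) \<and> x \<in> U x \<and> bounded (h ` U x)" by metis
  have "K \<subseteq> \<Union> (U ` K)" using U by auto
  then obtain C where C: "C \<subseteq> K" "finite C" "K \<subseteq> \<Union> (U ` C)"
    using compactE_image[OF assms(2), of K U] U by metis
  have "bounded (\<Union>x\<in>C. h ` U x)" using C U by (intro bounded_UN) auto
  then obtain B where B: "\<forall>z\<in>(\<Union>x\<in>C. h ` U x). norm z \<le> B" using bounded_iff by metis
  have "\<bar>h x\<bar> \<le> B" if xK: "x \<in> K" for x
  proof -
    obtain c where "c \<in> C" "x \<in> U c" using C(3) xK by blast
    then show ?thesis using B by fastforce
  qed
  then show ?thesis by blast
qed

locale cl =
  fixes G :: "('a::metric_space \<Rightarrow> 'a) set"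
  assumes cl: "cone_like G"
begin

lemma sg: "subgroup G (BijGroup (UNIV::'a set))" using cl unfolding cone_like_def by (elim conjE) assumption
lemma idG: "id \<in> G" using bij_group_facts(1)[OF sg] .
lemma compG: "f \<in> G \<Longrightarrow> h \<in> G \<Longrightarrow> f \<circ> h \<in> G" using bij_group_facts(2)[OF sg] .
lemma invG: "f \<in> G \<Longrightarrow> \<exists>h\<in>G. f \<circ> h = id \<and> h \<circ> f = id" using bij_group_facts(3)[OF sg] .

lemma hom: assumes "f \<in> G" shows "is_homothety f (hratio f)"
proof -
  have "\<forall>f\<in>G. \<exists>r. is_homothety f r" using cl unfolding cone_like_def by (elim conjE) assumption
  then have "\<exists>r. is_homothety f r" using assms by blast
  then show ?thesis unfolding hratio_def by (rule someI_ex)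
qed

lemma hpos: "f \<in> G \<Longrightarrow> hratio f > 0" using hom by (simp add: is_homothety_def)
lemma hdist: "f \<in> G \<Longrightarrow> dist (f x) (f y) = hratio f * dist x y" using hom by (simp add: is_homothety_def)

lemma free: assumes "f \<in> G" "f x = x" shows "f = id"
proof -
  have "\<forall>f\<in>G. \<forall>x. f x = x \<longrightarrow> f = id" using cl unfolding cone_like_def by (elim conjE) assumption
  then show ?thesis using assms by blast
qed
lemma isom: assumes "f \<in> G" "\<And>x y. dist (f x) (f y) = dist x y" shows "f = id"
proof -
  have "\<forall>f\<in>G. (\<forall>x y. dist (f x) (f y) = dist x y) \<longrightarrow> f = id" using cl unfolding cone_like_def by (elim conjE) assumption
  then show ?thesis using assms by blast
qed

lemma comm:
  assumes f: "f \<in> G" and h: "h \<in> G" shows "f \<circ> h = h \<circ> f"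
proof -
  obtain w' where w': "w' \<in> G" "(h \<circ> f) \<circ> w' = id" "w' \<circ> (h \<circ> f) = id" using invG[OF compG[OF h f]] by blast
  let ?e = "(f \<circ> h) \<circ> w'"
  have eG: "?e \<in> G" using compG[OF compG[OF f h] w'(1)] .
  have wx: "h (f (w' x)) = x" for x using w'(2) by (metis comp_apply id_apply)
  have "dist (?e x) (?e y) = dist x y" for x y
  proof -
    have "dist (?e x) (?e y) = hratio f * (hratio h * dist (w' x) (w' y))"
      using hdist[OF f] hdist[OF h] by simp
    also have "\<dots> = hratio h * (hratio f * dist (w' x) (w' y))" by simp
    also have "\<dots> = dist (h (f (w' x))) (h (f (w' y)))"
      using hdist[OF f] hdist[OF h] by simp
    also have "\<dots> = dist x y" using wx by simp
    finally show ?thesis .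
  qed
  then have "?e = id" using isom[OF eG] by blast
  then have "?e ((h \<circ> f) x) = (h \<circ> f) x" for x by simp
  moreover have "w' ((h \<circ> f) x) = x" for x using w'(3) by (metis comp_apply id_apply)
  ultimately show ?thesis by (auto simp: fun_eq_iff)
qed

lemma comm_pow:
  assumes f: "f \<in> G" and g: "g \<in> G" shows "f ((g ^^ m) x) = (g ^^ m) (f x)"
proof (induction m arbitrary: x)
  case 0 then show ?case by simp
next
  case (Suc m)
  have "f (g ((g ^^ m) x)) = g (f ((g ^^ m) x))" using comm[OF f g] by (metis comp_apply)
  then show ?case using Suc by simp
qed

lemma orbit_self: "y \<in> orbit G y" unfolding orbit_def using idG by (metis (mono_tags, lifting) id_apply mem_Collect_eq)

lemma orbit_eq: assumes f: "f \<in> G" shows "orbit G (f y) = orbit G y"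
proof -
  obtain f' where f': "f' \<in> G" "f \<circ> f' = id" "f' \<circ> f = id" using invG[OF f] by blast
  have "f' (f y) = y" using f'(3) by (metis comp_apply id_apply)
  have 1: "\<exists>k\<in>G. h (f y) = k y" if "h \<in> G" for h
    using compG[OF that f] by (metis comp_apply)
  have 2: "\<exists>k\<in>G. h y = k (f y)" if "h \<in> G" for h
    using compG[OF that f'(1)] \<open>f' (f y) = y\<close> by (metis comp_apply)
  show ?thesis unfolding orbit_def using 1 2 by blast
qed

lemma contraction: "\<exists>g\<in>G. g \<noteq> id \<and> hratio g < 1"
proof -
  have "G \<noteq> {id}" using cl unfolding cone_like_def by (elim conjE) assumption
  then obtain f where f: "f \<in> G" "f \<noteq> id" using idG by blast
  have "hratio f \<noteq> 1"
  proof
    assume "hratio f = 1"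
    then have "f = id" using isom[OF f(1)] hdist[OF f(1)] by simp
    then show False using f(2) by simp
  qed
  show ?thesis
  proof (cases "hratio f < 1")
    case True then show ?thesis using f by blast
  next
    case False
    then have gt: "hratio f > 1" using \<open>hratio f \<noteq> 1\<close> by simp
    obtain h where h: "h \<in> G" "f \<circ> h = id" "h \<circ> f = id" using invG[OF f(1)] by blast
    have hne: "h \<noteq> id" using h f(2) by auto
    obtain x where x: "f x \<noteq> x" using f(2) by (auto simp: fun_eq_iff)
    have "dist (f x) x = dist (f (h (f x))) (f (h x))" using h(2) by (metis comp_apply id_apply)
    also have "\<dots> = hratio f * (hratio h * dist (f x) x)" using hdist[OF f(1)] hdist[OF h(1)] by simp
    finally have "hratio f * hratio h = 1" using x by (simp add: field_simps)
    then have "hratio h < 1"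
    proof -
      assume e: "hratio f * hratio h = 1"
      show ?thesis
      proof (rule ccontr)
        assume "\<not> hratio h < 1"
        then have "hratio f * 1 \<le> hratio f * hratio h" using gt by (intro mult_left_mono) auto
        then show False using e gt by simp
      qed
    qed
    then show ?thesis using h hne by blast
  qed
qed

lemma fundamental: "\<exists>K r. compact K \<and> r > 0 \<and> (\<forall>y. \<exists>f\<in>G. cball (f y) r \<subseteq> K)"
proof -
  have "\<exists>Q. quotient_map euclidean Q (orbit G) \<and> compact_space Q"
    using cl unfolding cone_like_def by (elim conjE) assumption
  then obtain Q where qm: "quotient_map euclidean Q (orbit G)" and cs: "compact_space Q" by blast
  have lc: "locally_compact_space (euclidean :: 'a topology)" using cl unfolding cone_like_def by (elim conjE) assumption
  have ex: "\<exists>C e. compact C \<and> e > 0 \<and> cball x (2 * e) \<subseteq> C" for x :: 'a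
  proof -
    have "\<exists>U C. open U \<and> compact C \<and> x \<in> U \<and> U \<subseteq> C"
      using lc unfolding locally_compact_space_def by (simp add: compactin_euclidean_iff)
    then obtain U C where UC: "open U" "compact C" "x \<in> U" "U \<subseteq> C" by blast
    obtain e where e: "e > 0" "ball x e \<subseteq> U" using openE[OF UC(1) UC(3)] by blast
    have "cball x (2 * (e/4)) \<subseteq> ball x e" 
    proof
      fix z assume "z \<in> cball x (2 * (e/4))"
      then show "z \<in> ball x e" using e by simp
    qed
    then show ?thesis using e UC by (intro exI[of _ C] exI[of _ "e/4"]) auto
  qed
  have "\<forall>x::'a. \<exists>C. \<exists>e. compact C \<and> e > 0 \<and> cball x (2 * e) \<subseteq> C" by (intro allI ex)
  from choice[OF this] obtain Cf where "\<forall>x::'a. \<exists>e. compact (Cf x) \<and> e > 0 \<and> cball x (2 * e) \<subseteq> Cf x" by iprover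
  from choice[OF this] obtain R where H0: "\<forall>x::'a. compact (Cf x) \<and> R x > 0 \<and> cball x (2 * R x) \<subseteq> Cf x" by iprover
  then have H: "\<And>x::'a. compact (Cf x) \<and> R x > 0 \<and> cball x (2 * R x) \<subseteq> Cf x" by iprover
  define V where "V x = ball x (R x)" for x
  have tsQ: "topspace Q = orbit G ` UNIV" using qm by (simp add: quotient_map_def)
  have opn: "openin Q (orbit G ` V x)" for x
  proof -
    have sub: "orbit G ` V x \<subseteq> topspace Q" using tsQ by auto
    have eq: "{y \<in> topspace euclidean. orbit G y \<in> orbit G ` V x} = (\<Union>f\<in>G. f -` V x)"
    proof (rule Set.set_eqI, rule iffI)
      fix y assume "y \<in> {y \<in> topspace euclidean. orbit G y \<in> orbit G ` V x}"
      then obtain v where v: "v \<in> V x" "orbit G y = orbit G v" by auto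
      then have "v \<in> orbit G y" using orbit_self by simp
      then obtain f where "f \<in> G" "v = f y" unfolding orbit_def by blast
      then show "y \<in> (\<Union>f\<in>G. f -` V x)" using v by auto
    next
      fix y assume "y \<in> (\<Union>f\<in>G. f -` V x)"
      then obtain f where "f \<in> G" "f y \<in> V x" by auto
      then show "y \<in> {y \<in> topspace euclidean. orbit G y \<in> orbit G ` V x}"
        using orbit_eq[of f y] by (auto intro!: image_eqI[of _ _ "f y"])
    qed
    have "open (\<Union>f\<in>G. f -` V x)"
      by (intro open_UN ballI open_vimage homothety_cont[OF hom]) (auto simp: V_def)
    moreover have "openin euclidean {y. y \<in> topspace euclidean \<and> orbit G y \<in> orbit G ` V x} = openin Q (orbit G ` V x)"
      using qm sub unfolding quotient_map_def by blast
    ultimately show ?thesis using eq by simp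
  qed
  have "topspace Q \<subseteq> \<Union> (range (\<lambda>x. orbit G ` V x))"
    using tsQ H by (auto simp: V_def)
  note cov = this
  have opn': "\<forall>U\<in>range (\<lambda>x. orbit G ` V x). openin Q U" using opn by blast
  have cs': "\<forall>\<U>. (\<forall>U\<in>\<U>. openin Q U) \<and> topspace Q \<subseteq> \<Union>\<U> \<longrightarrow> (\<exists>F. finite F \<and> F \<subseteq> \<U> \<and> topspace Q \<subseteq> \<Union>F)"
    using cs unfolding compact_space_alt .
  have "\<exists>F. finite F \<and> F \<subseteq> range (\<lambda>x. orbit G ` V x) \<and> topspace Q \<subseteq> \<Union>F"
    using mp[OF spec[OF cs', of "range (\<lambda>x. orbit G ` V x)"] conjI[OF opn' cov]] .
  then obtain F where F: "finite F" "F \<subseteq> range (\<lambda>x. orbit G ` V x)" "topspace Q \<subseteq> \<Union>F"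
    by blast
  obtain D where D: "finite D" "F = (\<lambda>x. orbit G ` V x) ` D"
    using finite_subset_image[OF F(1) F(2)] by blast
  define K where "K = (\<Union>x\<in>D. Cf x)"
  define r where "r = Min (insert 1 (R ` D))"
  have cK: "compact K" unfolding K_def using D(1) H by (intro compact_UN) simp_all
  have rpos: "r > 0" unfolding r_def using D(1) H by (subst Min_gr_iff) simp_all
  have rle: "r \<le> R x" if "x \<in> D" for x unfolding r_def using D(1) that by (intro Min_le) simp_all
  have "\<exists>f\<in>G. cball (f y) r \<subseteq> K" for y :: 'a
  proof -
    have "orbit G y \<in> topspace Q" using tsQ by simp
    then have "orbit G y \<in> \<Union>F" using F(3) by (rule subsetD[rotated])
    then obtain S where S: "S \<in> F" "orbit G y \<in> S" by (rule UnionE)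
    then obtain x where x: "x \<in> D" "S = orbit G ` V x" using D(2) by (auto elim!: imageE)
    then obtain v where v: "v \<in> V x" "orbit G y = orbit G v" using S(2) by (auto elim!: imageE)
    then have "v \<in> orbit G y" using orbit_self by simp
    then obtain f where f: "f \<in> G" "v = f y" unfolding orbit_def by blast
    have "cball v r \<subseteq> cball x (2 * R x)"
    proof
      fix z assume "z \<in> cball v r"
      then have "dist v z \<le> R x" using rle[OF x(1)] by simp
      moreover have "dist x v < R x" using v(1) by (simp add: V_def)
      ultimately show "z \<in> cball x (2 * R x)" using dist_triangle[of x z v] by simp
    qed
    moreover have "Cf x \<subseteq> K" unfolding K_def using x(1) by (rule UN_upper)
    ultimately have "cball v r \<subseteq> K" using H[of x] by (meson subset_trans)
    then show ?thesis using f by (intro bexI[of _ f]) simp_all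
  qed
  note cov2 = this
  show ?thesis by (intro exI[of _ K] exI[of _ r] conjI allI cov2 cK rpos)
qed

end

locale cl2 = cl +
  fixes g
  assumes gG: "g \<in> G" and gne: "g \<noteq> id" and glt: "hratio g < 1"
begin

definition "p = (undefined :: 'a)"
definition "sq m = (g ^^ m) p"
definition "D y = lim (\<lambda>m. dist y (sq m))"
definition "c0 = dist p (g p) / (1 - hratio g)"

lemma lam_pos: "hratio g > 0" using hpos[OF gG] .

lemma hom_pow: "dist ((g ^^ m) x) ((g ^^ m) y) = hratio g ^ m * dist x y"
  using homothety_funpow[OF hom[OF gG], of m] by (simp add: is_homothety_def)

lemma c0_nonneg: "c0 \<ge> 0" using glt by (simp add: c0_def)

lemma dist_pow_bound: "dist p ((g ^^ k) p) \<le> c0"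
proof (induction k)
  case 0 then show ?case using c0_nonneg by simp
next
  case (Suc k)
  have "dist p ((g ^^ Suc k) p) \<le> dist p (g p) + dist (g p) (g ((g ^^ k) p))"
    by (simp add: dist_triangle)
  also have "\<dots> = dist p (g p) + hratio g * dist p ((g ^^ k) p)" using hdist[OF gG] by simp
  also have "\<dots> \<le> dist p (g p) + hratio g * c0" using Suc lam_pos by (intro add_left_mono mult_left_mono) auto
  also have "\<dots> = c0" using glt by (simp add: c0_def field_simps)
  finally show ?case .
qed

lemma sq_bound: "dist (sq m) (sq (m + k)) \<le> hratio g ^ m * c0"
proof -
  have "sq (m + k) = (g ^^ m) ((g ^^ k) p)" by (simp add: sq_def funpow_add)
  then have "dist (sq m) (sq (m + k)) = hratio g ^ m * dist p ((g ^^ k) p)"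
    by (simp add: sq_def hom_pow)
  also have "\<dots> \<le> hratio g ^ m * c0" using dist_pow_bound lam_pos by (intro mult_left_mono) auto
  finally show ?thesis .
qed

lemma sq_Cauchy: "Cauchy sq"
  unfolding Cauchy_def
proof (intro allI impI)
  fix e :: real assume e: "e > 0"
  have "(\<lambda>N. hratio g ^ N * c0) \<longlonglongrightarrow> 0 * c0"
    using glt lam_pos by (intro tendsto_mult tendsto_const LIMSEQ_power_zero) simp
  then have "\<forall>\<^sub>F N in sequentially. hratio g ^ N * c0 < e" using e by (simp add: order_tendsto_iff)
  then obtain N where N: "hratio g ^ N * c0 < e" by (auto simp: eventually_sequentially)
  have "dist (sq m) (sq n) < e" if "m \<ge> N" "n \<ge> N" for m n
  proof -
    have le: "dist (sq a) (sq b) \<le> hratio g ^ N * c0" if "a \<ge> N" "b \<ge> a" for a b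
    proof -
      have "dist (sq a) (sq b) \<le> hratio g ^ a * c0" using sq_bound[of a "b - a"] that by simp
      also have "\<dots> \<le> hratio g ^ N * c0" using that glt lam_pos c0_nonneg
        by (intro mult_right_mono power_decreasing) auto
      finally show ?thesis .
    qed
    show ?thesis
    proof (cases "m \<le> n")
      case True then show ?thesis using le[of m n] that N by simp
    next
      case False then show ?thesis using le[of n m] that N by (simp add: dist_commute)
    qed
  qed
  then show "\<exists>M. \<forall>m\<ge>M. \<forall>n\<ge>M. dist (sq m) (sq n) < e" by blast
qed

lemma sq_not_conv: "\<not> convergent sq"
proof
  assume "convergent sq"
  then obtain y where y: "sq \<longlonglongrightarrow> y" by (auto simp: convergent_def)
  have "(\<lambda>n. g (sq n)) \<longlonglongrightarrow> g y" using homothety_tendsto[OF hom[OF gG] y] .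
  moreover have "(\<lambda>n. g (sq n)) = (\<lambda>n. sq (Suc n))" by (simp add: sq_def)
  moreover have "(\<lambda>n. sq (Suc n)) \<longlonglongrightarrow> y" using y by (rule LIMSEQ_Suc)
  ultimately have "g y = y" using LIMSEQ_unique by metis
  then show False using free[OF gG] gne by blast
qed

lemma D_lim: "(\<lambda>m. dist y (sq m)) \<longlonglongrightarrow> D y"
  unfolding D_def using dist_Cauchy_real[OF sq_Cauchy] by (simp add: convergent_LIMSEQ_iff)

lemma D_nonneg: "D y \<ge> 0"
  using D_lim by (rule LIMSEQ_le_const) simp

lemma D_lip: "\<bar>D a - D b\<bar> \<le> dist a b"
proof -
  have "(\<lambda>m. \<bar>dist a (sq m) - dist b (sq m)\<bar>) \<longlonglongrightarrow> \<bar>D a - D b\<bar>"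
    by (intro tendsto_rabs tendsto_diff D_lim)
  moreover have "\<bar>dist a (sq m) - dist b (sq m)\<bar> \<le> dist a b" for m
    using dist_triangle[of a "sq m" b] dist_triangle[of b "sq m" a] by (simp add: dist_commute abs_le_iff)
  ultimately show ?thesis by (intro tendsto_le[OF _ tendsto_const]) auto
qed

lemma D_pos: "D y > 0"
proof (rule ccontr)
  assume "\<not> D y > 0"
  then have "D y = 0" using D_nonneg[of y] by simp
  then have "(\<lambda>m. dist (sq m) y) \<longlonglongrightarrow> 0" using D_lim[of y] by (simp add: dist_commute)
  then have "sq \<longlonglongrightarrow> y" using tendsto_dist_iff by blast
  then show False using sq_not_conv by (auto simp: convergent_def)
qed

lemma D_cont: "continuous_on S D"
proof -
  have "1-lipschitz_on S D" unfolding lipschitz_on_def using D_lip by (simp add: dist_real_def)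
  then show ?thesis by (rule lipschitz_on_continuous_on)
qed

lemma D_equiv: assumes f: "f \<in> G" shows "D (f y) = hratio f * D y"
proof -
  have c: "f (sq m) = (g ^^ m) (f p)" for m unfolding sq_def using comm_pow[OF f gG] .
  have "(\<lambda>m. dist (f y) (sq m) - hratio f * dist y (sq m)) \<longlonglongrightarrow> D (f y) - hratio f * D y"
    by (intro tendsto_diff tendsto_mult tendsto_const D_lim)
  moreover have "(\<lambda>m. dist (f y) (sq m) - hratio f * dist y (sq m)) \<longlonglongrightarrow> 0"
  proof (rule Lim_null_comparison)
    have "norm (dist (f y) (sq m) - hratio f * dist y (sq m)) \<le> hratio g ^ m * dist (f p) p" for m
    proof -
      have "hratio f * dist y (sq m) = dist (f y) (f (sq m))" using hdist[OF f] by simp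
      moreover have "dist (f (sq m)) (sq m) = hratio g ^ m * dist (f p) p" unfolding c by (simp add: sq_def hom_pow)
      moreover have "\<bar>dist (f y) (sq m) - dist (f y) (f (sq m))\<bar> \<le> dist (f (sq m)) (sq m)"
        using dist_triangle[of "f y" "sq m" "f (sq m)"] dist_triangle[of "f y" "f (sq m)" "sq m"]
        by (simp add: dist_commute abs_le_iff)
      ultimately show ?thesis by simp
    qed
    then show "\<forall>\<^sub>F m in sequentially. norm (dist (f y) (sq m) - hratio f * dist y (sq m)) \<le> hratio g ^ m * dist (f p) p"
      by simp
    show "(\<lambda>m. hratio g ^ m * dist (f p) p) \<longlonglongrightarrow> 0"
      using glt lam_pos by (intro tendsto_mult_left_zero LIMSEQ_power_zero) simp
  qed
  ultimately show ?thesis using LIMSEQ_unique by fastforce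
qed


lemma D_to_zero:
  assumes t: "Cauchy t" "\<not> convergent t"
  shows "(\<lambda>n. D (t n)) \<longlonglongrightarrow> 0"
proof -
  obtain K r where K: "compact K" "r > 0" "\<And>y. \<exists>f\<in>G. cball (f y) r \<subseteq> K"
    using fundamental by blast
  obtain B where B: "\<forall>k\<in>K. dist p k \<le> B" using compact_imp_bounded[OF K(1)] bounded_any_center by metis
  define MK where "MK = max 1 (D p + B)"
  have MKpos: "MK > 0" by (simp add: MK_def)
  have DK: "D k \<le> MK" if "k \<in> K" for k
  proof -
    have "D k \<le> D p + dist k p" using D_lip[of k p] by simp
    also have "\<dots> \<le> D p + B" using B that by (metis add_left_mono dist_commute)
    finally show ?thesis by (simp add: MK_def)
  qed
  have "Cauchy (\<lambda>n. D (t n))"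
    unfolding Cauchy_def
  proof (intro allI impI)
    fix e :: real assume "e > 0"
    then obtain M where M: "\<forall>m\<ge>M. \<forall>n\<ge>M. dist (t m) (t n) < e" using t(1) unfolding Cauchy_def by blast
    have "dist (D (t m)) (D (t n)) < e" if "m \<ge> M" "n \<ge> M" for m n
      using M that D_lip[of "t m" "t n"] by (simp add: dist_real_def) (meson order_le_less_trans)
    then show "\<exists>M. \<forall>m\<ge>M. \<forall>n\<ge>M. dist (D (t m)) (D (t n)) < e" by blast
  qed
  then obtain L where L: "(\<lambda>n. D (t n)) \<longlonglongrightarrow> L" using Cauchy_convergent_iff convergent_def by blast
  have L0: "L \<ge> 0" using L by (rule LIMSEQ_le_const) (simp add: D_nonneg)
  have "L = 0"
  proof (rule ccontr)
    assume "L \<noteq> 0"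
    then have Lpos: "L > 0" using L0 by simp
    define e where "e = r * L / (2 * MK)"
    have epos: "e > 0" using K(2) Lpos MKpos by (simp add: e_def)
    obtain N1 where N1: "\<forall>m\<ge>N1. \<forall>n\<ge>N1. dist (t m) (t n) < e" using t(1) epos unfolding Cauchy_def by blast
    have "\<forall>\<^sub>F n in sequentially. D (t n) > L / 2" using L Lpos by (intro order_tendstoD(1)) auto
    then obtain N2 where N2: "\<forall>n\<ge>N2. D (t n) > L / 2" by (auto simp: eventually_sequentially)
    define N where "N = max N1 N2"
    obtain f where f: "f \<in> G" "cball (f (t N)) r \<subseteq> K" using K(3) by blast
    have "f (t N) \<in> K" using f(2) K(2) by (auto simp: subset_iff)
    then have "hratio f * D (t N) \<le> MK" using DK D_equiv[OF f(1)] by metis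
    moreover have DN: "D (t N) > L / 2" using N2 by (simp add: N_def)
    ultimately have rf: "hratio f * (L / 2) < MK" using hpos[OF f(1)]
      by (meson mult_strict_left_mono order_less_le_trans)
    have inK: "f (t (n + N)) \<in> K" for n
    proof -
      have d: "dist (t (n + N)) (t N) < e" using N1 by (simp add: N_def)
      have "dist (f (t N)) (f (t (n + N))) = hratio f * dist (t (n + N)) (t N)"
        using hdist[OF f(1)] by (simp add: dist_commute)
      also have "\<dots> \<le> hratio f * e" using d hpos[OF f(1)] by (intro mult_left_mono) auto
      also have "\<dots> = r * (hratio f * (L / 2)) / MK" by (simp add: e_def field_simps)
      also have "\<dots> \<le> r" using rf MKpos K(2) by (simp add: divide_le_eq mult_left_mono less_imp_le)
      finally show ?thesis using f(2) by (auto simp: subset_iff)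
    qed
    have cau: "Cauchy (\<lambda>n. f (t (n + N)))" using homothety_Cauchy[OF hom[OF f(1)] t(1)] .
    have ink: "\<forall>n. f (t (n + N)) \<in> K" using inK by blast
    have cmp: "\<forall>X. (\<forall>n. X n \<in> K) \<and> Cauchy X \<longrightarrow> (\<exists>l\<in>K. X \<longlonglongrightarrow> l)"
      using compact_imp_complete[OF K(1)] unfolding complete_def .
    have "\<exists>l\<in>K. (\<lambda>n. f (t (n + N))) \<longlonglongrightarrow> l" using cmp[rule_format, OF conjI[OF ink cau]] .
    then obtain l where "(\<lambda>n. f (t (n + N))) \<longlonglongrightarrow> l" by blast
    moreover obtain h where h: "h \<in> G" "h \<circ> f = id" using invG[OF f(1)] by blast
    ultimately have "(\<lambda>n. h (f (t (n + N)))) \<longlonglongrightarrow> h l" using homothety_tendsto[OF hom[OF h(1)]] by blast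
    moreover have "h (f x) = x" for x using h(2) by (metis comp_apply id_apply)
    ultimately have "(\<lambda>n. t (n + N)) \<longlonglongrightarrow> h l" by simp
    then have "t \<longlonglongrightarrow> h l" by (rule LIMSEQ_offset)
    then show False using t(2) by (auto simp: convergent_def)
  qed
  then show ?thesis using L by simp
qed

lemma sing_dist_D: "sing_dist x = D x"
proof -
  have conv: "(\<lambda>n. dist x (t n)) \<longlonglongrightarrow> D x" if t: "Cauchy t" "\<not> convergent t" for t
  proof -
    have Dt: "(\<lambda>n. D (t n)) \<longlonglongrightarrow> 0" using D_to_zero[OF t] .
    have le: "\<bar>dist x (t n) - D x\<bar> \<le> D (t n)" for n
    proof -
      have "(\<lambda>m. \<bar>dist x (t n) - dist x (sq m)\<bar>) \<longlonglongrightarrow> \<bar>dist x (t n) - D x\<bar>"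
        by (intro tendsto_rabs tendsto_diff tendsto_const D_lim)
      moreover have "\<bar>dist x (t n) - dist x (sq m)\<bar> \<le> dist (t n) (sq m)" for m
        using dist_triangle[of x "t n" "sq m"] dist_triangle[of x "sq m" "t n"] by (simp add: dist_commute abs_le_iff)
      ultimately show ?thesis by (intro tendsto_le[OF _ D_lim]) auto
    qed
    have "(\<lambda>n. dist x (t n) - D x) \<longlonglongrightarrow> 0"
      by (rule Lim_null_comparison[OF _ Dt]) (use le in simp)
    then show ?thesis by (simp add: LIM_zero_iff)
  qed
  show ?thesis unfolding sing_dist_def
  proof (rule the_equality)
    show "\<exists>s. Cauchy s \<and> \<not> convergent s \<and> (\<lambda>n. dist x (s n)) \<longlonglongrightarrow> D x"
      using sq_Cauchy sq_not_conv D_lim by blast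
    fix r assume "\<exists>s. Cauchy s \<and> \<not> convergent s \<and> (\<lambda>n. dist x (s n)) \<longlonglongrightarrow> r"
    then obtain s where s: "Cauchy s" "\<not> convergent s" "(\<lambda>n. dist x (s n)) \<longlonglongrightarrow> r" by blast
    then show "r = D x" using conv[OF s(1,2)] LIMSEQ_unique by blast
  qed
qed


lemma sd_cont: "continuous_on (S :: 'a set) sing_dist"
proof -
  have eq: "sing_dist = D" by (rule ext) (rule sing_dist_D)
  show ?thesis unfolding eq by (rule D_cont)
qed

lemma sd_pos: "sing_dist (x :: 'a) > 0" using D_pos sing_dist_D by simp

lemma sd_equiv: "f \<in> G \<Longrightarrow> sing_dist (f y) = hratio f * sing_dist y"
  using D_equiv sing_dist_D by simp

end


theorem mainTheorem5:
  fixes G :: "('a::metric_space \<Rightarrow> 'a) set" and \<psi> :: "'a \<Rightarrow> real"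
  assumes "cone_like G"
    and "\<And>x. \<psi> x > 0"
    and "\<And>f x. f \<in> G \<Longrightarrow> \<psi> (f x) = hratio f * \<psi> x"
    and "locally_bounded \<psi>"
    and "locally_bounded (\<lambda>x. inverse (\<psi> x))"
  shows "quasi_linear \<psi>"
proof -
  interpret c1: cl G by unfold_locales (rule assms(1))
  obtain g where g: "g \<in> G" "g \<noteq> id" "hratio g < 1" using c1.contraction by blast
  interpret c2: cl2 G g by unfold_locales (use g in auto)
  obtain K r where K: "compact K" "r > 0" "\<And>y. \<exists>f\<in>G. cball (f y) r \<subseteq> K"
    using c1.fundamental by blast
  have Kin: "\<exists>f\<in>G. f y \<in> K" for y
  proof -
    obtain f where "f \<in> G" "cball (f y) r \<subseteq> K" using K(3) by blast
    moreover have "f y \<in> cball (f y) r" using K(2) by simp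
    ultimately show ?thesis by blast
  qed
  have Kne: "K \<noteq> {}" using Kin by blast
  obtain A where A: "\<forall>x\<in>K. \<bar>\<psi> x\<bar> \<le> A" using locally_bounded_compact[OF assms(4) K(1)] by blast
  obtain Bi where Bi: "\<forall>x\<in>K. \<bar>inverse (\<psi> x)\<bar> \<le> Bi" using locally_bounded_compact[OF assms(5) K(1)] by blast
  define B' where "B' = max 1 Bi"
  have B'pos: "B' > 0" by (simp add: B'_def)
  have psi_low: "1 / B' \<le> \<psi> x" if "x \<in> K" for x
  proof -
    have "inverse (\<psi> x) \<le> B'" using Bi that assms(2)[of x] by (simp add: B'_def) (smt (verit))
    then show ?thesis using assms(2)[of x] B'pos by (simp add: field_simps)
  qed
  obtain x0 where x0: "x0 \<in> K" "\<forall>y\<in>K. sing_dist x0 \<le> sing_dist y"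
    using continuous_attains_inf[OF K(1) Kne c2.sd_cont] by blast
  obtain x1 where x1: "x1 \<in> K" "\<forall>y\<in>K. sing_dist y \<le> sing_dist x1"
    using continuous_attains_sup[OF K(1) Kne c2.sd_cont] by blast
  define mK where "mK = sing_dist x0"
  define MK where "MK = sing_dist x1"
  have mKpos: "mK > 0" unfolding mK_def by (rule c2.sd_pos)
  have MKpos: "MK > 0" unfolding MK_def by (rule c2.sd_pos)
  have A0: "A \<ge> 0" using A x0(1) by force
  define k1 where "k1 = (1 / B') / MK"
  define k2 where "k2 = max k1 (A / mK)"
  have k1pos: "k1 > 0" using B'pos MKpos by (simp add: k1_def)
  have bounds: "k1 * sing_dist x \<le> \<psi> x \<and> \<psi> x \<le> k2 * sing_dist x" for x
  proof -
    obtain f where f: "f \<in> G" "f x \<in> K" using Kin by blast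
    have rp: "hratio f > 0" using c1.hpos[OF f(1)] .
    have ps: "\<psi> (f x) = hratio f * \<psi> x" using assms(3)[OF f(1)] .
    have sd: "sing_dist (f x) = hratio f * sing_dist x" using c2.sd_equiv[OF f(1)] .
    have "hratio f * (k1 * sing_dist x) = k1 * sing_dist (f x)" using sd by simp
    also have "\<dots> \<le> k1 * MK" using x1(2) f(2) k1pos unfolding MK_def by (intro mult_left_mono) auto
    also have "\<dots> = 1 / B'" using MKpos by (simp add: k1_def)
    also have "\<dots> \<le> \<psi> (f x)" using psi_low[OF f(2)] .
    also have "\<dots> = hratio f * \<psi> x" by (rule ps)
    finally have 1: "k1 * sing_dist x \<le> \<psi> x" using rp by simp
    have "hratio f * \<psi> x = \<psi> (f x)" by (rule ps[symmetric])
    also have "\<dots> \<le> A" using A f(2) by force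
    also have "\<dots> = (A / mK) * mK" using mKpos by simp
    also have "\<dots> \<le> (A / mK) * sing_dist (f x)" using x0(2) f(2) A0 mKpos unfolding mK_def
      by (intro mult_left_mono) auto
    also have "\<dots> = hratio f * ((A / mK) * sing_dist x)" using sd by simp
    also have "\<dots> \<le> hratio f * (k2 * sing_dist x)" using rp c2.sd_pos[of x]
      by (intro mult_left_mono mult_right_mono) (auto simp: k2_def)
    finally have 2: "\<psi> x \<le> k2 * sing_dist x" using rp by simp
    show ?thesis using 1 2 by blast
  qed
  have "k1 \<le> k2" by (simp add: k2_def)
  then show ?thesis unfolding quasi_linear_def using assms(2) k1pos bounds by blast
qed

end
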